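(* Let $G_i=(V_i,E_i)$ be a simple graph of maximum degree $\Delta_i$, $i\in\{1,2\}$, and let $S\subseteq V_1\times V_2$. Then: (i) If, for some $i\in\{1,2\}$ and integer $k_i$, $P_{V_i}(S)$ is a $k_i$-daf set in $G_i$, then $S$ is a $(k_i+\Delta_j)$-daf set in $G_1\times G_2$, where $j\in\{1,2\}$, $j\neq i$. (ii) If, for integers $k_1,k_2$, $P_{V_1}(S)$ is a $k_1$-daf set in $G_1$ and $P_{V_2}(S)$ is a $k_2$-daf set in $G_2$, then $S$ is a $(k_1+k_2-1)$-daf set in $G_1\times G_2$.
   Context: All graphs are finite and simple. For a graph $G=(V,E)$, a set $S\subseteq V$ and $v\in V$, let $\delta_S(v)=|\{u\in S: uv\in E\}|$, $\delta(v)$ the degree of $v$, and $\overline{S}=V\setminus S$. For an integer $k$, a non-empty set $S\subseteq V$ is a defensive $k$-alliance if $\delta_S(v)\ge \delta_{\overline S}(v)+k$ for every $v\in S$. A set $X\subseteq V$ is a defensive $k$-alliance free set ($k$-daf set) if no defensive $k$-alliance $S$ satisfies $S\subseteq X$. The Cartesian product $G_1\times G_2$ of $G_1=(V_1,E_1)$, $G_2=(V_2,E_2)$ has vertex set $V_1\times V_2$, with $(a,b)$ adjacent to $(c,d)$ iff either $a=c$ and $bd\in E_2$, or $b=d$ and $ac\in E_1$. For $A\subseteq V_1\times V_2$, $P_{V_i}(A)$ denotes the projection of $A$ onto $V_i$. *)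

theory Defs
  imports Main
begin

definition simple_graph :: "'a set \<Rightarrow> ('a \<Rightarrow> 'a \<Rightarrow> bool) \<Rightarrow> bool" where
  "simple_graph V E \<longleftrightarrow> finite V \<and> (\<forall>u v. E u v \<longrightarrow> u \<in> V \<and> v \<in> V)
     \<and> (\<forall>u v. E u v \<longrightarrow> E v u) \<and> (\<forall>v. \<not> E v v)"

definition delta_in :: "('a \<Rightarrow> 'a \<Rightarrow> bool) \<Rightarrow> 'a set \<Rightarrow> 'a \<Rightarrow> nat" where
  "delta_in E S v = card {u \<in> S. E u v}"

definition degree :: "'a set \<Rightarrow> ('a \<Rightarrow> 'a \<Rightarrow> bool) \<Rightarrow> 'a \<Rightarrow> nat" where
  "degree V E v = delta_in E V v"

definition max_degree :: "'a set \<Rightarrow> ('a \<Rightarrow> 'a \<Rightarrow> bool) \<Rightarrow> nat" where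
  "max_degree V E = Max (insert 0 (degree V E ` V))"

definition defensive_alliance :: "'a set \<Rightarrow> ('a \<Rightarrow> 'a \<Rightarrow> bool) \<Rightarrow> int \<Rightarrow> 'a set \<Rightarrow> bool" where
  "defensive_alliance V E k S \<longleftrightarrow> S \<noteq> {} \<and> S \<subseteq> V \<and>
     (\<forall>v\<in>S. int (delta_in E S v) \<ge> int (delta_in E (V - S) v) + k)"

definition daf_set :: "'a set \<Rightarrow> ('a \<Rightarrow> 'a \<Rightarrow> bool) \<Rightarrow> int \<Rightarrow> 'a set \<Rightarrow> bool" where
  "daf_set V E k X \<longleftrightarrow> X \<subseteq> V \<and> \<not> (\<exists>S. S \<subseteq> X \<and> defensive_alliance V E k S)"

definition cart_edges :: "('a \<Rightarrow> 'a \<Rightarrow> bool) \<Rightarrow> ('b \<Rightarrow> 'b \<Rightarrow> bool) \<Rightarrow> ('a \<times> 'b) \<Rightarrow> ('a \<times> 'b) \<Rightarrow> bool" where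
  "cart_edges E1 E2 x y \<longleftrightarrow> (fst x = fst y \<and> E2 (snd x) (snd y)) \<or> (snd x = snd y \<and> E1 (fst x) (fst y))"

end

theory Submission
  imports Defs
begin

lemma sg_fin: "simple_graph V E \<Longrightarrow> finite {u \<in> T. E u v}"
  unfolding simple_graph_def by (metis (no_types, lifting) finite_subset mem_Collect_eq subsetI)

lemma delta_mono: "simple_graph V E \<Longrightarrow> T \<subseteq> T' \<Longrightarrow> delta_in E T v \<le> delta_in E T' v"
  unfolding delta_in_def by (rule card_mono[OF sg_fin]) auto

lemma delta_split: assumes "simple_graph V E" "C \<subseteq> V"
  shows "delta_in E C v + delta_in E (V - C) v = degree V E v"
proof -
  have "{u \<in> V. E u v} = {u \<in> C. E u v} \<union> {u \<in> V - C. E u v}" using assms(2) by auto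
  moreover have "card ({u \<in> C. E u v} \<union> {u \<in> V - C. E u v}) = card {u \<in> C. E u v} + card {u \<in> V - C. E u v}"
    by (rule card_Un_disjoint[OF sg_fin[OF assms(1)] sg_fin[OF assms(1)]]) auto
  ultimately show ?thesis unfolding degree_def delta_in_def by simp
qed

lemma deg_le_max: assumes "simple_graph V E" "v \<in> V"
  shows "degree V E v \<le> max_degree V E"
  using assms unfolding max_degree_def simple_graph_def by (intro Max_ge) auto

lemma cart_split:
  assumes g1: "simple_graph V1 E1" and g2: "simple_graph V2 E2"
  shows "delta_in (cart_edges E1 E2) B (a,b) =
     delta_in E1 {x. (x,b) \<in> B} a + delta_in E2 {y. (a,y) \<in> B} b"
proof -
  let ?P = "{x \<in> {x. (x,b) \<in> B}. E1 x a}" and ?Q = "{y \<in> {y. (a,y) \<in> B}. E2 y b}"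
  have eq: "{u \<in> B. cart_edges E1 E2 u (a,b)} = (\<lambda>x. (x,b)) ` ?P \<union> (\<lambda>y. (a,y)) ` ?Q"
    unfolding cart_edges_def by force
  have fP: "finite ?P" by (rule sg_fin[OF g1])
  have fQ: "finite ?Q" by (rule sg_fin[OF g2])
  have irr: "\<not> E1 a a" using g1 unfolding simple_graph_def by auto
  have "card ((\<lambda>x. (x,b)) ` ?P \<union> (\<lambda>y. (a,y)) ` ?Q) = card ((\<lambda>x. (x,b)) ` ?P) + card ((\<lambda>y. (a,y)) ` ?Q)"
    by (rule card_Un_disjoint) (use fP fQ irr in auto)
  also have "\<dots> = card ?P + card ?Q"
    by (subst card_image, simp add: inj_on_def)+ simp
  finally show ?thesis unfolding delta_in_def eq .
qed

theorem theorem1: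
  fixes V1 :: "'a set" and E1 :: "'a \<Rightarrow> 'a \<Rightarrow> bool"
    and V2 :: "'b set" and E2 :: "'b \<Rightarrow> 'b \<Rightarrow> bool"
    and S :: "('a \<times> 'b) set"
  assumes "simple_graph V1 E1" and "simple_graph V2 E2"
    and "S \<subseteq> V1 \<times> V2"
  shows "(\<forall>k1::int. daf_set V1 E1 k1 (fst ` S) \<longrightarrow>
            daf_set (V1 \<times> V2) (cart_edges E1 E2) (k1 + int (max_degree V2 E2)) S)
       \<and> (\<forall>k2::int. daf_set V2 E2 k2 (snd ` S) \<longrightarrow>
            daf_set (V1 \<times> V2) (cart_edges E1 E2) (k2 + int (max_degree V1 E1)) S)
       \<and> (\<forall>k1 k2::int. daf_set V1 E1 k1 (fst ` S) \<and> daf_set V2 E2 k2 (snd ` S) \<longrightarrow>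
            daf_set (V1 \<times> V2) (cart_edges E1 E2) (k1 + k2 - 1) S)"
proof (intro conjI allI impI)
  note g1 = assms(1) and g2 = assms(2) and SV = assms(3)
  have rowc: "{x. (x,b) \<in> V1 \<times> V2 - A} = V1 - {x. (x,b) \<in> A}" if "b \<in> V2" for A b using that by auto
  have colc: "{y. (a,y) \<in> V1 \<times> V2 - A} = V2 - {y. (a,y) \<in> A}" if "a \<in> V1" for A a using that by auto
  have dec: "int (delta_in (cart_edges E1 E2) A (a,b)) = int (delta_in E1 {x. (x,b) \<in> A} a) + int (delta_in E2 {y. (a,y) \<in> A} b)"
    "int (delta_in (cart_edges E1 E2) (V1 \<times> V2 - A) (a,b)) = int (delta_in E1 (V1 - {x. (x,b) \<in> A}) a) + int (delta_in E2 (V2 - {y. (a,y) \<in> A}) b)"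
    if "a \<in> V1" "b \<in> V2" for A a b
    using cart_split[OF g1 g2] rowc[OF that(2)] colc[OF that(1)] by auto
  {
    fix k1 :: int assume d: "daf_set V1 E1 k1 (fst ` S)"
    show "daf_set (V1 \<times> V2) (cart_edges E1 E2) (k1 + int (max_degree V2 E2)) S"
      unfolding daf_set_def
    proof (intro conjI notI)
      show "S \<subseteq> V1 \<times> V2" by (rule SV)
      assume "\<exists>A. A \<subseteq> S \<and> defensive_alliance (V1 \<times> V2) (cart_edges E1 E2) (k1 + int (max_degree V2 E2)) A"
      then obtain A where AS: "A \<subseteq> S" and al: "defensive_alliance (V1 \<times> V2) (cart_edges E1 E2) (k1 + int (max_degree V2 E2)) A" by blast
      from al obtain a0 b0 where ab0: "(a0,b0) \<in> A" unfolding defensive_alliance_def by auto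
      have b0: "b0 \<in> V2" using ab0 AS SV by auto
      let ?R = "{x. (x,b0) \<in> A}"
      have "defensive_alliance V1 E1 k1 ?R"
        unfolding defensive_alliance_def
      proof (intro conjI ballI)
        show "?R \<noteq> {}" using ab0 by auto
        show "?R \<subseteq> V1" using AS SV by auto
        fix a assume "a \<in> ?R"
        hence aA: "(a,b0) \<in> A" and a: "a \<in> V1" using AS SV by auto
        let ?C = "{y. (a,y) \<in> A}"
        have C: "?C \<subseteq> V2" using AS SV by auto
        have h: "int (delta_in (cart_edges E1 E2) A (a,b0)) \<ge> int (delta_in (cart_edges E1 E2) (V1 \<times> V2 - A) (a,b0)) + (k1 + int (max_degree V2 E2))"
          using al aA unfolding defensive_alliance_def by blast
        have s: "delta_in E2 ?C b0 + delta_in E2 (V2 - ?C) b0 \<le> max_degree V2 E2"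
          using delta_split[OF g2 C] deg_le_max[OF g2 b0] by simp
        show "int (delta_in E1 ?R a) \<ge> int (delta_in E1 (V1 - ?R) a) + k1"
          using h s dec[OF a b0, of A] by linarith
      qed
      moreover have "?R \<subseteq> fst ` S" using AS by force
      ultimately show False using d unfolding daf_set_def by blast
    qed
  }
  {
    fix k2 :: int assume d: "daf_set V2 E2 k2 (snd ` S)"
    show "daf_set (V1 \<times> V2) (cart_edges E1 E2) (k2 + int (max_degree V1 E1)) S"
      unfolding daf_set_def
    proof (intro conjI notI)
      show "S \<subseteq> V1 \<times> V2" by (rule SV)
      assume "\<exists>A. A \<subseteq> S \<and> defensive_alliance (V1 \<times> V2) (cart_edges E1 E2) (k2 + int (max_degree V1 E1)) A"
      then obtain A where AS: "A \<subseteq> S" and al: "defensive_alliance (V1 \<times> V2) (cart_edges E1 E2) (k2 + int (max_degree V1 E1)) A" by blast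
      from al obtain a0 b0 where ab0: "(a0,b0) \<in> A" unfolding defensive_alliance_def by auto
      have a0: "a0 \<in> V1" using ab0 AS SV by auto
      let ?C = "{y. (a0,y) \<in> A}"
      have "defensive_alliance V2 E2 k2 ?C"
        unfolding defensive_alliance_def
      proof (intro conjI ballI)
        show "?C \<noteq> {}" using ab0 by auto
        show "?C \<subseteq> V2" using AS SV by auto
        fix b assume "b \<in> ?C"
        hence bA: "(a0,b) \<in> A" and b: "b \<in> V2" using AS SV by auto
        let ?R = "{x. (x,b) \<in> A}"
        have R: "?R \<subseteq> V1" using AS SV by auto
        have h: "int (delta_in (cart_edges E1 E2) A (a0,b)) \<ge> int (delta_in (cart_edges E1 E2) (V1 \<times> V2 - A) (a0,b)) + (k2 + int (max_degree V1 E1))"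
          using al bA unfolding defensive_alliance_def by blast
        have s: "delta_in E1 ?R a0 + delta_in E1 (V1 - ?R) a0 \<le> max_degree V1 E1"
          using delta_split[OF g1 R] deg_le_max[OF g1 a0] by simp
        show "int (delta_in E2 ?C b) \<ge> int (delta_in E2 (V2 - ?C) b) + k2"
          using h s dec[OF a0 b, of A] by linarith
      qed
      moreover have "?C \<subseteq> snd ` S" using AS by force
      ultimately show False using d unfolding daf_set_def by blast
    qed
  }
  {
    fix k1 k2 :: int assume d: "daf_set V1 E1 k1 (fst ` S) \<and> daf_set V2 E2 k2 (snd ` S)"
    show "daf_set (V1 \<times> V2) (cart_edges E1 E2) (k1 + k2 - 1) S"
      unfolding daf_set_def
    proof (intro conjI notI)
      show "S \<subseteq> V1 \<times> V2" by (rule SV)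
      assume "\<exists>A. A \<subseteq> S \<and> defensive_alliance (V1 \<times> V2) (cart_edges E1 E2) (k1 + k2 - 1) A"
      then obtain A where AS: "A \<subseteq> S" and al: "defensive_alliance (V1 \<times> V2) (cart_edges E1 E2) (k1 + k2 - 1) A" by blast
      have ne: "fst ` A \<noteq> {}" using al unfolding defensive_alliance_def by auto
      have sub1: "fst ` A \<subseteq> fst ` S" using AS by auto
      hence "\<not> defensive_alliance V1 E1 k1 (fst ` A)" using d unfolding daf_set_def by blast
      moreover have "fst ` A \<subseteq> V1" using AS SV by auto
      ultimately obtain a1 where a1A: "a1 \<in> fst ` A" and bad: "\<not> int (delta_in E1 (fst ` A) a1) \<ge> int (delta_in E1 (V1 - fst ` A) a1) + k1"
        using ne unfolding defensive_alliance_def by blast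
      have a1: "a1 \<in> V1" using a1A AS SV by auto
      let ?C = "{y. (a1,y) \<in> A}"
      have "defensive_alliance V2 E2 k2 ?C"
        unfolding defensive_alliance_def
      proof (intro conjI ballI)
        show "?C \<noteq> {}" using a1A by force
        show "?C \<subseteq> V2" using AS SV by auto
        fix b assume "b \<in> ?C"
        hence bA: "(a1,b) \<in> A" and b: "b \<in> V2" using AS SV by auto
        let ?R = "{x. (x,b) \<in> A}"
        have h: "int (delta_in (cart_edges E1 E2) A (a1,b)) \<ge> int (delta_in (cart_edges E1 E2) (V1 \<times> V2 - A) (a1,b)) + (k1 + k2 - 1)"
          using al bA unfolding defensive_alliance_def by blast
        have m1: "delta_in E1 ?R a1 \<le> delta_in E1 (fst ` A) a1"
          by (rule delta_mono[OF g1]) force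
        have m2: "delta_in E1 (V1 - fst ` A) a1 \<le> delta_in E1 (V1 - ?R) a1"
          by (rule delta_mono[OF g1]) force
        show "int (delta_in E2 ?C b) \<ge> int (delta_in E2 (V2 - ?C) b) + k2"
          using h m1 m2 bad dec[OF a1 b, of A] by linarith
      qed
      moreover have "?C \<subseteq> snd ` S" using AS by force
      ultimately show False using d unfolding daf_set_def by blast
    qed
  }
qed

end
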